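(* For every integer $k\ge 0$ and every list $L$ of $k$ pairwise distinct elements, running $\mathrm{Permutations}(L,0,\mathrm{Func})$ calls $\mathrm{Func}$ exactly $k!$ times, and the lists passed to $\mathrm{Func}$ are exactly the $k!$ permutations (orderings) of the elements of $L$, each occurring exactly once.
   Context: Lists are 0-indexed. For a list $L$, $\mathrm{extract}(L,j)$ removes the element at position $j$ from $L$ and returns it; $\mathrm{Insert}(L,i,x)$ inserts $x$ into $L$ so that it occupies position $i$, shifting the elements previously at positions $\ge i$ one step to the right. Each combined operation $\mathrm{Insert}(L,i,\mathrm{extract}(L,j))$ first extracts, then inserts, so the length of $L$ is unchanged. The recursive procedure $\mathrm{Permutations}(L,i,\mathrm{Func})$ (with $\mathrm{Func}$ a callback applied to the current state of the list) is: let $n=\mathrm{length}(L)$. If $i\ge n-1$, call $\mathrm{Func}(L)$. Otherwise: (1) call $\mathrm{Permutations}(L,i+1,\mathrm{Func})$; (2) do $\mathrm{Insert}(L,i,\mathrm{extract}(L,i+1))$ and call $\mathrm{Permutations}(L,i+1,\mathrm{Func})$; (3) repeat $\max(n-i-3,0)$ times: if $n-i$ is even, do $\mathrm{Insert}(L,i,\mathrm{extract}(L,n-1))$, otherwise do $\mathrm{Insert}(L,i,\mathrm{extract}(L,i+1))$; then call $\mathrm{Permutations}(L,i+1,\mathrm{Func})$; (4) if $n-i>2$: do $\mathrm{Insert}(L,i,\mathrm{extract}(L,i+1))$ and call $\mathrm{Permutations}(L,i+1,\mathrm{Func})$. *)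

theory Defs
  imports Main "HOL-Library.Multiset"
begin

definition list_extract :: "'a list \<Rightarrow> nat \<Rightarrow> 'a \<times> 'a list" where
  "list_extract L j = (L ! j, take j L @ drop (Suc j) L)"

definition insert_at :: "'a list \<Rightarrow> nat \<Rightarrow> 'a \<Rightarrow> 'a list" where
  "insert_at L i x = take i L @ x # drop i L"

definition move :: "'a list \<Rightarrow> nat \<Rightarrow> nat \<Rightarrow> 'a list" where
  "move L i j = (let (x, L') = list_extract L j in insert_at L' i x)"

(* The recursive procedure, with an explicit fuel argument (to make it a total primitive
  recursive function).  perm_go f i L returns the final state of the list together with
  the sequence (in calling order) of the lists passed to Func. *)
primrec perm_go :: "nat \<Rightarrow> nat \<Rightarrow> 'a list \<Rightarrow> 'a list \<times> 'a list list" where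
  "perm_go 0 i L = (L, [])"
| "perm_go (Suc f) i L =
     (let n = length L in
      if n \<le> i + 1 then (L, [L])
      else
        (let step = (\<lambda>j (M :: 'a list, out :: 'a list list).
                        let (M', out') = perm_go f (i + 1) (move M i j) in (M', out @ out'));
             s1 = perm_go f (i + 1) L;
             s2 = step (i + 1) s1;
             s3 = (step (if even (n - i) then n - 1 else i + 1) ^^ (n - i - 3)) s2
         in if n - i > 2 then step (i + 1) s3 else s3))"

(* Permutations(L,0,Func): the list of arguments passed to Func, in calling order.
  The fuel length L + 1 exceeds the recursion depth. *)
definition perm_calls :: "'a list \<Rightarrow> 'a list list" where
  "perm_calls L = snd (perm_go (Suc (length L)) 0 L)"

end

theory Submission
  imports Defs
begin


definition stp :: "nat \<Rightarrow> nat \<Rightarrow> nat \<Rightarrow> 'a list \<times> 'a list list \<Rightarrow> 'a list \<times> 'a list list" where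
  "stp f i j s = (fst (perm_go f (i+1) (move (fst s) i j)), snd s @ snd (perm_go f (i+1) (move (fst s) i j)))"

lemma stp_eq: "(\<lambda>j (M :: 'a list, out :: 'a list list).
                        let (M', out') = perm_go f (i + 1) (move M i j) in (M', out @ out')) = stp f i"
  by (auto simp: fun_eq_iff stp_def Let_def split: prod.split)

lemma perm_go_Suc: "perm_go (Suc f) i L = (if length L \<le> i+1 then (L,[L]) else
   (let s1 = perm_go f (i+1) L; s2 = stp f i (i+1) s1;
        s3 = (stp f i (if even (length L - i) then length L - 1 else i+1) ^^ (length L - i - 3)) s2
    in if length L - i > 2 then stp f i (i+1) s3 else s3))"
  unfolding perm_go.simps stp_eq[symmetric] by (simp add: Let_def)

lemma move_shift: "move (p @ M) (i + length p) (j + length p) = p @ move M i j"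
  by (simp add: move_def list_extract_def insert_at_def nth_append)

definition lift :: "'a list \<Rightarrow> 'a list \<times> 'a list list \<Rightarrow> 'a list \<times> 'a list list" where
  "lift p s = (p @ fst s, map ((@) p) (snd s))"

lemma iter_lift:
  assumes "\<And>s. g (lift p s) = lift p (g' s)"
  shows "(g ^^ k) (lift p s) = lift p ((g' ^^ k) s)"
  by (induction k) (simp_all add: assms)

lemma perm_go_shift:
  "perm_go f (i + length p) (p @ M) = lift p (perm_go f i M)"
proof (induction f arbitrary: i M)
  case 0
  then show ?case by (simp add: lift_def)
next
  case (Suc f)
  have st: "stp f (i + length p) (j + length p) (lift p s) = lift p (stp f i j s)" for j s
  proof -
    have "perm_go f (i + length p + 1) (move (p @ fst s) (i + length p) (j + length p))
        = lift p (perm_go f (i+1) (move (fst s) i j))"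
      using Suc.IH[of "i+1" "move (fst s) i j"] by (simp add: move_shift add.commute add.left_commute)
    then show ?thesis by (simp add: stp_def lift_def)
  qed
  have it: "(stp f (i + length p) (j + length p) ^^ k) (lift p s) = lift p ((stp f i j ^^ k) s)" for j k s
    by (rule iter_lift) (rule st)
  show ?case
  proof (cases "length M \<le> i + 1")
    case True
    then show ?thesis by (simp add: perm_go_Suc lift_def)
  next
    case False
    have e1: "length (p @ M) - 1 = (length M - 1) + length p" using False by simp
    have e2: "i + length p + 1 = (i + 1) + length p" by simp
    have e3: "(if even (length (p @ M) - (i + length p)) then length (p @ M) - 1 else i + length p + 1)
       = (if even (length M - i) then length M - 1 else i + 1) + length p"
      using False by auto
    have s1: "perm_go f (i + length p + 1) (p @ M) = lift p (perm_go f (i+1) M)"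
      using Suc.IH[of "i+1" M] by (simp add: add.commute add.left_commute)
    show ?thesis using False
      apply (simp only: perm_go_Suc[of f "i + length p"] perm_go_Suc[of f i] Let_def e3 s1)
      apply (simp only: e2 st it)
      apply (simp add: lift_def)
      done
  qed
qed



definition mvix :: "nat \<Rightarrow> nat \<Rightarrow> nat" where
  "mvix j q = (if q = 0 then j else if q \<le> j then q - 1 else q)"

definition sx :: "nat \<Rightarrow> nat \<Rightarrow> nat" where
  "sx m q = (if odd m then (if m = 1 then q else if q = 0 then 1 else if q = 1 then 0 else q)
    else if m = 2 then (if q = 0 then 1 else 0)
    else if m = 4 then (if q < 3 then q + 1 else 0)
    else if q = 0 then 1 else if q = 1 then 4 else if q = 2 then 3 else if q \<le> m - 3 then q + 2
    else if q = m - 2 then 2 else 0)"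

definition tix :: "nat \<Rightarrow> nat \<Rightarrow> nat" where
  "tix m q = (if q = 0 then 0 else Suc (sx (m - 1) (q - 1)))"

definition phi :: "nat \<Rightarrow> nat \<Rightarrow> nat \<Rightarrow> nat" where
  "phi m j q = mvix j (tix m q)"

definition Jm :: "nat \<Rightarrow> nat" where
  "Jm m = (if even m then m - 1 else 1)"

definition Hd :: "nat \<Rightarrow> nat list" where
  "Hd m = [0, tix m 1] @ map (\<lambda>t. tix m (phi m 1 ((phi m (Jm m) ^^ t) (Jm m)))) [0..<m-3]
     @ (if m > 2 then [tix m (phi m 1 ((phi m (Jm m) ^^ (m-3)) 1))] else [])"

definition Fin :: "nat \<Rightarrow> nat \<Rightarrow> nat" where
  "Fin m q = (if m > 2 then tix m (phi m 1 ((phi m (Jm m) ^^ (m-3)) (phi m 1 q))) else tix m (phi m 1 q))"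

lemma sx_bound: "q < m \<Longrightarrow> sx m q < m"
  by (auto simp: sx_def)

lemma tix_bound: "q < m \<Longrightarrow> tix m q < m"
proof (cases "q = 0")
  case False
  assume "q < m"
  then have "q - 1 < m - 1" using False by simp
  then have "sx (m - 1) (q - 1) < m - 1" by (rule sx_bound)
  then show ?thesis using False by (simp add: tix_def)
qed (simp add: tix_def)

lemma mvix_bound: "q < m \<Longrightarrow> j < m \<Longrightarrow> mvix j q < m"
  by (auto simp: mvix_def)

lemma phi_bound: "q < m \<Longrightarrow> j < m \<Longrightarrow> phi m j q < m"
  by (simp add: phi_def mvix_bound tix_bound)

lemma phi_pow_bound: "q < m \<Longrightarrow> j < m \<Longrightarrow> (phi m j ^^ k) q < m"
  by (induction k) (auto simp: phi_bound)

lemma cycle_id: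
  fixes g :: "nat \<Rightarrow> nat"
  assumes b: "\<And>q. q < m \<Longrightarrow> g q < m" and x: "x < m"
    and d: "distinct (map (\<lambda>k. (g ^^ k) x) [0..<m])" and c: "(g ^^ m) x = x" and q: "q < m"
  shows "(g ^^ m) q = q"
proof -
  have bb: "(g ^^ k) x < m" for k by (induction k) (auto simp: b x)
  have "set (map (\<lambda>k. (g ^^ k) x) [0..<m]) \<subseteq> {..<m}" using bb by auto
  moreover have "card (set (map (\<lambda>k. (g ^^ k) x) [0..<m])) = m"
    using distinct_card[OF d] by simp
  ultimately have "set (map (\<lambda>k. (g ^^ k) x) [0..<m]) = {..<m}"
    by (simp add: card_subset_eq)
  then obtain k where "q = (g ^^ k) x" using q by (metis (no_types, lifting) ex_map_conv lessThan_iff)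
  then have "(g ^^ m) q = (g ^^ k) ((g ^^ m) x)"
    by (metis funpow_swap1 comp_apply funpow_add add.commute)
  then show ?thesis using c \<open>q = _\<close> by simp
qed


lemma upt_02: "[0..<Suc (Suc n)] = 0 # 1 # [2..<n+2]"
proof -
  have "[0..<2+n] = [0..<2] @ [2..<2+n]" by (rule upt_add_eq_append) simp
  also have "[0..<2] = [0::nat,1]" by (simp add: numeral_2_eq_2)
  finally show ?thesis by (simp add: add.commute)
qed

lemma map_upt_split3:
  assumes "3 \<le> m"
  shows "map g [0..<m] = [g 0, g 1] @ map (\<lambda>t. g (t+2)) [0..<m-3] @ [g (m-1)]"
proof -
  obtain n where m: "m = Suc (Suc (Suc n))" using assms by (metis Suc_diff_Suc diff_Suc_1 le_Suc_ex numeral_3_eq_3 add_Suc)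
  have a: "[0..<m] = [0,1] @ [2..<n+2] @ [n+2]"
  proof -
    have "[0..<m] = [0..<Suc (Suc n)] @ [n+2]" unfolding m by simp
    also have "\<dots> = (0 # 1 # [2..<n+2]) @ [n+2]" by (subst upt_02) (rule refl)
    finally show ?thesis by simp
  qed
  have b: "map (\<lambda>t. g (t+2)) [0..<n] = map g [2..<n+2]"
  proof -
    have "map g [2..<n+2] = map g (map (\<lambda>i. i + 2) [0..<n])" by (simp only: map_add_upt)
    then show ?thesis by simp
  qed
  have c: "m - 3 = n" "m - 1 = n + 2" using m by auto
  show ?thesis unfolding c b a by simp
qed
lemma mvix1_inv: "mvix 1 (mvix 1 x) = x"
  by (simp add: mvix_def)

lemma tix_phi1: "tix m q = mvix 1 (phi m 1 q)"
  unfolding phi_def by (rule mvix1_inv[symmetric])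

lemma odd_Hd: "odd m \<Longrightarrow> 3 \<le> m \<Longrightarrow> Hd m = map (\<lambda>k. mvix 1 ((phi m 1 ^^ k) 1)) [0..<m]"
proof -
  assume o: "odd m" "3 \<le> m"
  let ?c = "\<lambda>k. mvix 1 ((phi m 1 ^^ k) 1)"
  have a0: "?c 0 = 0" by (simp add: mvix_def)
  have f1: "(phi m 1 ^^ 1) 1 = phi m 1 1" by (simp only: One_nat_def funpow.simps comp_apply id_apply)
  have a1: "?c 1 = tix m 1" unfolding f1 tix_phi1[of m 1] by (rule refl)
  have a2: "?c (t+2) = tix m (phi m 1 ((phi m 1 ^^ t) 1))" for t
  proof -
    have "(phi m 1 ^^ (t+2)) 1 = phi m 1 (phi m 1 ((phi m 1 ^^ t) 1))" by simp
    then show ?thesis by (simp only: tix_phi1[of m])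
  qed
  have e: "m - 1 = (m - 3) + 2" using o by simp
  have a3: "?c (m - 1) = tix m (phi m 1 ((phi m 1 ^^ (m-3)) 1))"
    unfolding e by (rule a2)
  have J: "Jm m = 1" using o by (simp add: Jm_def)
  show ?thesis
    apply (subst map_upt_split3[OF o(2)])
    apply (simp only: a0 a1 a2 a3)
    using o by (simp add: Hd_def J)
qed

lemma odd_Fin: "odd m \<Longrightarrow> 3 \<le> m \<Longrightarrow> Fin m q = mvix 1 ((phi m 1 ^^ m) q)"
proof -
  assume "odd m" "3 \<le> m"
  then have "m = Suc (Suc (Suc (m - 3)))" by simp
  then have "(phi m 1 ^^ m) q = phi m 1 (phi m 1 ((phi m 1 ^^ (m-3)) (phi m 1 q)))"
    by (metis funpow.simps(2) funpow_Suc_right o_apply)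
  then show ?thesis using \<open>odd m\<close> \<open>3 \<le> m\<close> by (simp add: Fin_def Jm_def tix_phi1[of m])
qed

lemma odd_main:
  assumes "odd m" "3 \<le> m" and d: "distinct (map (\<lambda>k. (phi m 1 ^^ k) 1) [0..<m])"
    and c: "(phi m 1 ^^ m) 1 = 1"
  shows "distinct (Hd m) \<and> (\<forall>q<m. Fin m q = sx m q)"
proof
  have "inj (mvix 1)" by (metis injI mvix1_inv)
  then have "inj_on (mvix 1) (set (map (\<lambda>k. (phi m 1 ^^ k) 1) [0..<m]))"
    by (metis inj_on_subset subset_UNIV)
  then have "distinct (map (mvix 1) (map (\<lambda>k. (phi m 1 ^^ k) 1) [0..<m]))"
    using d by (simp only: distinct_map)
  then show "distinct (Hd m)" using assms(1,2) by (simp add: odd_Hd comp_def)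
  show "\<forall>q<m. Fin m q = sx m q"
  proof (intro allI impI)
    fix q assume q: "q < m"
    have "(phi m 1 ^^ m) q = q"
      by (rule cycle_id[of m "phi m 1" 1]) (use assms q phi_bound in auto)
    then show "Fin m q = sx m q" using assms q by (simp add: odd_Fin sx_def mvix_def)
  qed
qed
lemma phi_odd7: "odd m \<Longrightarrow> 7 \<le> m \<Longrightarrow> q < m \<Longrightarrow> phi m 1 q = (if q = 0 then 1 else if q = 1 then 2 else if q = 2 then 5
   else if q = 3 then 4 else if q \<le> m-3 then q+2 else if q = m-2 then 3 else 0)"
proof -
  assume a: "odd m" "7 \<le> m" "q < m"
  obtain n where n: "m = Suc n" using a by (cases m) auto
  have n6: "even n" "6 \<le> n" using a n by auto
  have sx: "sx n p = (if p=0 then 1 else if p=1 then 4 else if p=2 then 3 else if p \<le> n-3 then p+2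
     else if p = n-2 then 2 else 0)" for p using n6 by (simp add: sx_def)
  have ph: "phi m 1 q = mvix 1 (if q = 0 then 0 else Suc (sx n (q-1)))" by (simp add: phi_def tix_def n)
  consider "q = 0" | "q = 1" | "q = 2" | "q = 3" | "4 \<le> q \<and> q \<le> m - 3" | "q = m - 2" | "q = m - 1"
    using a by linarith
  then show ?thesis
  proof cases
    case 5
    then have "q - 1 \<le> n - 3" "q - 1 \<noteq> 0" "q - 1 \<noteq> 1" "q - 1 \<noteq> 2" using n by auto
    then have "sx n (q-1) = q + 1" unfolding sx using 5 by auto
    then show ?thesis unfolding ph using 5 by (simp add: mvix_def)
  next
    case 6
    then have "sx n (q-1) = 2" unfolding sx using n n6 by auto
    moreover have "\<not> m - 2 \<le> m - 3" "m - 2 \<noteq> 3" "m - 2 \<noteq> 2" "m - 2 \<noteq> 1" "m - 2 \<noteq> 0" using a by auto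
    ultimately show ?thesis unfolding ph using 6 by (simp add: mvix_def)
  next
    case 7
    then have "sx n (q-1) = 0" unfolding sx using n n6 by auto
    moreover have "\<not> m - 1 \<le> m - 3" "m - 1 \<noteq> 3" "m - 1 \<noteq> 2" "m - 1 \<noteq> 1" "m - 1 \<noteq> 0"  "m - 1 \<noteq> m - 2" using a by auto
    ultimately show ?thesis unfolding ph using 7 by (simp add: mvix_def)
  qed (unfold ph, use n6 in \<open>simp_all add: sx mvix_def\<close>)+
qed

definition cc :: "nat \<Rightarrow> nat \<Rightarrow> nat" where
  "cc r k = (if k = 0 then 1 else if k = 1 then 2 else if k < r then 2*k+1 else if k = r then 3
     else if k < 2*r then 2*(k-r)+2 else 0)"

lemma orbit_odd7:
  assumes r: "3 \<le> r" and m: "m = 2*r+1"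
  shows "k \<le> 2*r \<Longrightarrow> (phi m 1 ^^ k) 1 = cc r k"
proof (induction k)
  case 0
  then show ?case by (simp add: cc_def)
next
  case (Suc k)
  then have ih: "(phi m 1 ^^ k) 1 = cc r k" by simp
  have o: "odd m" "7 \<le> m" using r m by auto
  have b: "cc r k < m" using Suc.prems r m by (auto simp: cc_def)
  have "(phi m 1 ^^ Suc k) 1 = phi m 1 (cc r k)" using ih by simp
  also have "\<dots> = cc r (Suc k)"
    unfolding phi_odd7[OF o b] using Suc.prems r m by (auto simp: cc_def; presburger)
  finally show ?case .
qed

lemma odd7_ok:
  assumes "odd m" "7 \<le> m"
  shows "distinct (map (\<lambda>k. (phi m 1 ^^ k) 1) [0..<m]) \<and> (phi m 1 ^^ m) 1 = 1"
proof -
  obtain r where m: "m = 2*r+1" using assms(1) oddE by blast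
  have r: "3 \<le> r" using assms m by simp
  have eq: "map (\<lambda>k. (phi m 1 ^^ k) 1) [0..<m] = map (cc r) [0..<m]"
    using orbit_odd7[OF r m] m by simp
  have inj: "inj_on (cc r) {0..<m}"
    unfolding inj_on_def cc_def using m r by (auto split: if_splits; presburger)
  have "(phi m 1 ^^ m) 1 = phi m 1 ((phi m 1 ^^ (2*r)) 1)" using m by simp
  also have "\<dots> = phi m 1 0" using orbit_odd7[OF r m, of "2*r"] r by (simp add: cc_def)
  also have "\<dots> = 1" by (simp add: phi_def tix_def mvix_def)
  moreover have "distinct (map (cc r) [0..<m])" using inj by (simp add: distinct_map)
  ultimately show ?thesis unfolding eq by simp
qed

lemma dvd24: "Suc (Suc 0) dvd Suc (Suc (Suc (Suc 0)))"
  by presburger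

lemma odd35_ok:
  "distinct (map (\<lambda>k. (phi 3 1 ^^ k) 1) [0..<3]) \<and> (phi 3 1 ^^ 3) 1 = 1"
  "distinct (map (\<lambda>k. (phi 5 1 ^^ k) 1) [0..<5]) \<and> (phi 5 1 ^^ 5) 1 = 1"
  by (simp_all add: phi_def tix_def sx_def mvix_def numeral_eq_Suc upt_rec dvd24)



lemma even_tix: "even m \<Longrightarrow> 4 \<le> m \<Longrightarrow> tix m q = (if q = 1 then 2 else if q = 2 then 1 else q)"
  by (auto simp: tix_def sx_def)

lemma even_phi1: "even m \<Longrightarrow> 4 \<le> m \<Longrightarrow> phi m 1 q = (if q = 0 then 1 else if q = 1 then 2 else if q = 2 then 0 else q)"
  by (auto simp: phi_def even_tix mvix_def)

lemma even_phiJ: "even m \<Longrightarrow> 4 \<le> m \<Longrightarrow> q < m \<Longrightarrow> phi m (m-1) q = (if q = 0 then m-1 else if q = 1 then 1 else if q = 2 then 0 else q - 1)"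
  by (auto simp: phi_def even_tix mvix_def)

definition PJ :: "nat \<Rightarrow> nat \<Rightarrow> nat \<Rightarrow> nat" where
  "PJ m t q = (if q = 1 then 1 else if q = 0 then (if t = 0 then 0 else m - t)
     else if t + 2 \<le> q then q - t else if t + 1 = q then 0 else m - 1 + q - t)"

lemma even_pow:
  assumes "even m" "4 \<le> m" "q < m"
  shows "t \<le> m - 3 \<Longrightarrow> (phi m (m-1) ^^ t) q = PJ m t q"
proof (induction t)
  case 0
  then show ?case by (simp add: PJ_def)
next
  case (Suc t)
  then have ih: "(phi m (m-1) ^^ t) q = PJ m t q" by simp
  have b: "PJ m t q < m" using assms Suc.prems by (auto simp: PJ_def)
  have "(phi m (m-1) ^^ Suc t) q = phi m (m-1) (PJ m t q)" using ih by simp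
  also have "\<dots> = PJ m (Suc t) q"
    unfolding even_phiJ[OF assms(1,2) b] using assms Suc.prems by (auto simp: PJ_def)
  finally show ?case .
qed

lemma even_Hd:
  assumes e: "even m" "4 \<le> m"
  shows "Hd m = [0,2] @ map (\<lambda>t. m-1-t) [0..<m-3] @ [1]"
proof -
  have J: "Jm m = m - 1" using e by (simp add: Jm_def)
  have mid: "tix m (phi m 1 ((phi m (m-1) ^^ t) (m-1))) = m-1-t" if t: "t < m - 3" for t
  proof -
    have p: "PJ m t (m-1) = m-1-t" using t e unfolding PJ_def by auto
    have "(phi m (m-1) ^^ t) (m-1) = PJ m t (m-1)" by (rule even_pow[OF e]) (use t e in auto)
    then have "(phi m (m-1) ^^ t) (m-1) = m-1-t" using p by simp
    moreover have "tix m (phi m 1 (m-1-t)) = m-1-t" unfolding even_phi1[OF e] even_tix[OF e] using t e by auto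
    ultimately show ?thesis by simp
  qed
  have last: "tix m (phi m 1 ((phi m (m-1) ^^ (m-3)) 1)) = 1"
  proof -
    have "(phi m (m-1) ^^ (m-3)) 1 = PJ m (m-3) 1" by (rule even_pow[OF e]) (use e in auto)
    then have "(phi m (m-1) ^^ (m-3)) 1 = 1" by (simp add: PJ_def)
    moreover have "tix m (phi m 1 1) = 1" unfolding even_phi1[OF e] even_tix[OF e] by simp
    ultimately show ?thesis by simp
  qed
  have "map (\<lambda>t. tix m (phi m 1 ((phi m (m-1) ^^ t) (m-1)))) [0..<m-3] = map (\<lambda>t. m-1-t) [0..<m-3]"
    using mid by simp
  then show ?thesis using e last by (simp add: Hd_def J even_tix)
qed

lemma even_Fin:
  assumes e: "even m" "4 \<le> m" and q: "q < m"
  shows "Fin m q = sx m q"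
proof -
  have J: "Jm m = m - 1" using e by (simp add: Jm_def)
  have b: "phi m 1 q < m" using q e by (simp add: phi_bound)
  have F: "Fin m q = tix m (phi m 1 (PJ m (m-3) (phi m 1 q)))"
  proof -
    have "(phi m (m-1) ^^ (m-3)) (phi m 1 q) = PJ m (m-3) (phi m 1 q)" by (rule even_pow[OF e b]) simp
    then show ?thesis using e unfolding Fin_def J by simp
  qed
  have p1: "phi m 1 x = (if x = 0 then 1 else if x = 1 then 2 else if x = 2 then 0 else x)" for x
    by (rule even_phi1[OF e])
  have tx: "tix m x = (if x = 1 then 2 else if x = 2 then 1 else x)" for x
    by (rule even_tix[OF e])
  have sx0: "sx m 0 = 1" "sx m 2 = 3" "sx m (m-1) = 0" using e by (auto simp: sx_def)
  consider "q = 0" | "q = 1" | "q = 2" | "3 \<le> q \<and> q \<le> m - 3" | "3 \<le> q \<and> q = m - 2" | "q = m - 1"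
    using q e by linarith
  then show ?thesis
  proof cases
    case 1
    have "PJ m (m-3) 1 = 1" by (simp add: PJ_def)
    then have "Fin m q = 1" using F unfolding 1 p1 tx by simp
    then show ?thesis unfolding 1 sx0 .
  next
    case 2
    show ?thesis
    proof (cases "m = 4")
      case True
      have "PJ m (m-3) 2 = 0" using True by (simp add: PJ_def)
      then have "Fin m q = 2" using F unfolding 2 p1 tx by simp
      then show ?thesis unfolding 2 True by (simp add: sx_def)
    next
      case False
      then have m6: "6 \<le> m" using e by presburger
      have "PJ m (m-3) 2 = 4" using m6 by (simp add: PJ_def)
      moreover have "sx m 1 = 4" using m6 e by (simp add: sx_def)
      moreover note F
      ultimately show ?thesis unfolding 2 p1 tx by simp
    qed
  next
    case 3
    have "PJ m (m-3) 0 = 3" using e by (simp add: PJ_def)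
    then have "Fin m q = 3" using F unfolding 3 p1 tx by simp
    then show ?thesis unfolding 3 sx0 .
  next
    case 4
    then have m6: "6 \<le> m" using e by linarith
    have "PJ m (m-3) q = q + 2" using 4 e unfolding PJ_def by auto
    moreover have "sx m q = q + 2" using m6 e 4 unfolding sx_def by auto
    moreover have "phi m 1 q = q" unfolding p1 using 4 by simp
    moreover have "tix m (phi m 1 (q+2)) = q+2" unfolding p1 tx using 4 by simp
    ultimately show ?thesis using F by simp
  next
    case 5
    have "PJ m (m-3) q = 0" using 5 e unfolding PJ_def by auto
    moreover have "sx m q = 2" using e 5 unfolding sx_def by auto
    moreover have "phi m 1 q = q" unfolding p1 using 5 by auto
    moreover have "tix m (phi m 1 0) = 2" unfolding p1 tx by simp
    ultimately show ?thesis using F by simp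
  next
    case 6
    have "PJ m (m-3) q = 2" using 6 e unfolding PJ_def by auto
    moreover have "phi m 1 q = q" unfolding p1 using 6 e by auto
    moreover have "tix m (phi m 1 2) = 0" unfolding p1 tx by simp
    ultimately have "Fin m q = 0" using F by simp
    then show ?thesis unfolding 6 sx0 by simp
  qed
qed

lemma even_main:
  assumes e: "even m" "4 \<le> m"
  shows "distinct (Hd m) \<and> (\<forall>q<m. Fin m q = sx m q)"
proof
  show "distinct (Hd m)" unfolding even_Hd[OF e] by (auto simp: distinct_map inj_on_def)
  show "\<forall>q<m. Fin m q = sx m q" using even_Fin[OF e] by blast
qed

lemma idx_ok:
  assumes "2 \<le> m"
  shows "distinct (Hd m) \<and> (\<forall>q<m. Fin m q = sx m q)"
proof (cases "m = 2")
  case True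
  have "Hd 2 = [0, 1]" by (simp add: Hd_def tix_def sx_def)
  moreover have "\<forall>q<2. Fin 2 q = sx 2 q"
    by (auto simp: Fin_def tix_def sx_def phi_def mvix_def less_2_cases_iff)
  ultimately show ?thesis using True by simp
next
  case False
  then have m3: "3 \<le> m" using assms by simp
  show ?thesis
  proof (cases "even m")
    case True
    have "m \<noteq> 3" using True by auto
    then have "4 \<le> m" using m3 by simp
    then show ?thesis using even_main True by blast
  next
    case False
    show ?thesis
    proof (cases "m = 3 \<or> m = 5")
      case True
      then show ?thesis
      proof
        assume "m = 3" then show ?thesis using odd_main[of 3] odd35_ok(1) by simp
      next
        assume "m = 5" then show ?thesis using odd_main[of 5] odd35_ok(2) by simp
      qed
    next
      case f2: False
      have "m \<noteq> 4" "m \<noteq> 6" using False by auto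
      then have "7 \<le> m" using f2 m3 by simp
      then show ?thesis using odd_main odd7_ok False m3 by blast
    qed
  qed
qed



definition app :: "(nat \<Rightarrow> nat) \<Rightarrow> 'a list \<Rightarrow> 'a list" where
  "app p L = map (\<lambda>q. L ! p q) [0..<length L]"

lemma length_app[simp]: "length (app p L) = length L"
  by (simp add: app_def)

lemma app_comp: "(\<And>q. q < length M \<Longrightarrow> p q < length M) \<Longrightarrow> app p (app r M) = app (\<lambda>q. r (p q)) M"
  unfolding app_def by (rule map_cong) auto

lemma hd_app: "0 < length M \<Longrightarrow> hd (app p M) = M ! p 0"
  by (simp add: app_def hd_map upt_conv_Cons)

lemma app_cong: "(\<And>q. q < length M \<Longrightarrow> p q = r q) \<Longrightarrow> app p M = app r M"
  unfolding app_def by (rule map_cong) auto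

lemma move0: "move M 0 j = M ! j # take j M @ drop (Suc j) M"
  by (simp add: move_def list_extract_def insert_at_def)

lemma move_app: "j < length M \<Longrightarrow> move M 0 j = app (mvix j) M"
  unfolding move0 app_def
  by (rule nth_equalityI) (auto simp: nth_Cons' nth_append mvix_def min_def)

lemma mset_ins: "mset (take i X @ x # drop i X) = add_mset x (mset X)"
proof -
  have "mset (take i X @ x # drop i X) = add_mset x (mset (take i X) + mset (drop i X))" by simp
  then show ?thesis by (metis append_take_drop_id mset_append)
qed

lemma mset_move: "j < length M \<Longrightarrow> mset (move M i j) = mset M"
proof -
  assume j: "j < length M"
  have "mset M = mset (take j M @ M ! j # drop (Suc j) M)" using id_take_nth_drop[OF j] by simp
  also have "\<dots> = add_mset (M ! j) (mset (take j M @ drop (Suc j) M))" by simp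
  moreover have "move M i j = take i (take j M @ drop (Suc j) M) @ M ! j # drop i (take j M @ drop (Suc j) M)"
    by (simp add: move_def list_extract_def insert_at_def)
  ultimately show ?thesis by (simp only: mset_ins)
qed

lemma funpow_inv: "(\<And>s. P s \<Longrightarrow> P (g s)) \<Longrightarrow> P s \<Longrightarrow> P ((g ^^ k) s)"
  by (induction k) auto

lemma mset_perm_go:
  "mset (fst (perm_go f i L)) = mset L \<and> (\<forall>M\<in>set (snd (perm_go f i L)). mset M = mset L)"
proof (induction f arbitrary: i L)
  case 0
  then show ?case by simp
next
  case (Suc f)
  define P where "P s \<longleftrightarrow> mset (fst s) = mset L \<and> (\<forall>M\<in>set (snd s). mset M = mset L)" for s :: "'a list \<times> 'a list list"
  have st: "P (stp f i j s)" if "P s" "j < length L" for j s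
  proof -
    have j: "j < length (fst s)" using that by (metis P_def size_mset)
    have "mset (move (fst s) i j) = mset L" using mset_move[OF j] that(1) by (simp add: P_def)
    then show ?thesis using Suc.IH[of "i+1" "move (fst s) i j"] that(1) by (auto simp: stp_def P_def)
  qed
  show ?case
  proof (cases "length L \<le> i + 1")
    case True
    then show ?thesis by (simp add: perm_go_Suc)
  next
    case False
    have p1: "P (perm_go f (i+1) L)" using Suc.IH[of "i+1" L] by (simp add: P_def)
    have p2: "P (stp f i (i+1) (perm_go f (i+1) L))" using st p1 False by simp
    have jj: "(if even (length L - i) then length L - 1 else i + 1) < length L" using False by auto
    have p3: "P ((stp f i (if even (length L - i) then length L - 1 else i + 1) ^^ k) (stp f i (i+1) (perm_go f (i+1) L)))" for k
      apply (rule funpow_inv[of P])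
       apply (erule st[OF _ jj])
      apply (rule p2)
      done
    have p4: "P (stp f i (i+1) ((stp f i (if even (length L - i) then length L - 1 else i + 1) ^^ k) (stp f i (i+1) (perm_go f (i+1) L))))" for k
      using st[OF p3] False by simp
    have "P (perm_go (Suc f) i L)" unfolding perm_go_Suc[of f i L] Let_def using False p2 p3 p4 by simp
    then show ?thesis by (simp add: P_def)
  qed
qed

lemma combine:
  fixes L :: "'a list" and PC :: "'a list list" and B :: "'a list \<Rightarrow> 'a list list"
  assumes dL: "distinct L" and ne: "L \<noteq> []" and len: "length PC = length L"
    and ms: "\<And>M. M \<in> set PC \<Longrightarrow> mset M = mset L"
    and dh: "distinct (map hd PC)"
    and hB: "\<And>M. M \<in> set PC \<Longrightarrow> distinct (B M) \<and> set (B M) = {hd M # p | p. mset p = mset (tl M)}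
              \<and> length (B M) = fact (length L - 1)"
  shows "distinct (concat (map B PC)) \<and> set (concat (map B PC)) = {M. mset M = mset L}
         \<and> length (concat (map B PC)) = fact (length L)"
proof (intro conjI)
  have Mne: "M \<noteq> []" if "M \<in> set PC" for M using ms[OF that] ne by auto
  have hdin: "hd M \<in> set L" if "M \<in> set PC" for M
    using Mne[OF that] ms[OF that] by (metis hd_in_set set_mset_mset)
  have heads: "set (map hd PC) = set L"
  proof (rule card_subset_eq)
    show "finite (set L)" by simp
    show "set (map hd PC) \<subseteq> set L" using hdin by auto
    show "card (set (map hd PC)) = card (set L)"
      using distinct_card[OF dh] distinct_card[OF dL] len by simp
  qed
  have injhd: "inj_on hd (set PC)" using dh by (simp add: distinct_map)
  have dPC: "distinct PC" using dh by (simp add: distinct_map)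
  have Bhd: "x \<in> set (B M) \<Longrightarrow> M \<in> set PC \<Longrightarrow> hd x = hd M" for x M using hB by auto
  have Bne: "B M \<noteq> []" if "M \<in> set PC" for M
    using hB[OF that] by (metis fact_nonzero length_0_conv)
  show "length (concat (map B PC)) = fact (length L)"
  proof -
    have "length (concat (map B PC)) = sum_list (map (\<lambda>M. fact (length L - 1)) PC)"
      by (simp add: length_concat comp_def hB cong: map_cong)
    also have "\<dots> = length L * fact (length L - 1)" by (simp add: sum_list_triv len)
    also have "\<dots> = fact (length L)" using ne by (simp add: fact_reduce)
    finally show ?thesis .
  qed
  show "distinct (concat (map B PC))"
  proof (rule distinct_concat)
    have "inj_on B (set PC)"
    proof (rule inj_onI)
      fix M1 M2 assume a: "M1 \<in> set PC" "M2 \<in> set PC" "B M1 = B M2"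
      obtain x where x: "x \<in> set (B M1)" using Bne[OF a(1)] by (metis list.set_sel(1))
      then have "hd M1 = hd M2" using Bhd[OF x a(1)] Bhd[of x M2] a by simp
      then show "M1 = M2" using injhd a by (meson inj_onD)
    qed
    then show "distinct (map B PC)" using dPC by (simp add: distinct_map)
    show "\<And>ys. ys \<in> set (map B PC) \<Longrightarrow> distinct ys" using hB by auto
    show "\<And>ys zs. ys \<in> set (map B PC) \<Longrightarrow> zs \<in> set (map B PC) \<Longrightarrow> ys \<noteq> zs \<Longrightarrow> set ys \<inter> set zs = {}"
    proof -
      fix ys zs assume a: "ys \<in> set (map B PC)" "zs \<in> set (map B PC)" "ys \<noteq> zs"
      then obtain M1 M2 where m: "M1 \<in> set PC" "M2 \<in> set PC" "ys = B M1" "zs = B M2" by auto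
      then have "hd M1 \<noteq> hd M2" using a(3) injhd by (metis inj_onD)
      then show "set ys \<inter> set zs = {}" using Bhd[OF _ m(1)] Bhd[OF _ m(2)] m(3,4) by fastforce
    qed
  qed
  show "set (concat (map B PC)) = {M. mset M = mset L}"
  proof (intro equalityI subsetI)
    fix x assume "x \<in> set (concat (map B PC))"
    then obtain M where M: "M \<in> set PC" "x \<in> set (B M)" by auto
    then obtain p where p: "x = hd M # p" "mset p = mset (tl M)" using hB by blast
    have "M = hd M # tl M" using Mne[OF M(1)] by simp
    then have "mset x = mset M" using p by (metis mset.simps(2))
    then show "x \<in> {M. mset M = mset L}" using ms[OF M(1)] by simp
  next
    fix x assume "x \<in> {M. mset M = mset L}"
    then have x: "mset x = mset L" by simp
    then have xne: "x \<noteq> []" using ne by auto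
    have "hd x \<in> set L" using xne x by (metis hd_in_set set_mset_mset)
    then obtain M where M: "M \<in> set PC" "hd M = hd x" using heads by (metis imageE list.set_map)
    have "mset (hd x # tl x) = mset (hd M # tl M)" using xne Mne[OF M(1)] x ms[OF M(1)] by simp
    then have "mset (tl x) = mset (tl M)" using M(2) by simp
    then have "x \<in> set (B M)" using hB[OF M(1)] M(2) xne by (metis (mono_tags, lifting) list.collapse mem_Collect_eq)
    then show "x \<in> set (concat (map B PC))" using M(1) by auto
  qed
qed

lemma sub1: "perm_go f 1 (x # xs) = lift [x] (perm_go f 0 xs)"
  using perm_go_shift[of f 0 "[x]" xs] by simp

lemma iter_gen:
  assumes "\<And>s. G s = (Phi (fst s), snd s @ C (fst s))"
  shows "(G ^^ k) s = ((Phi ^^ k) (fst s), snd s @ concat (map (\<lambda>t. C ((Phi ^^ t) (fst s))) [0..<k]))"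
  by (induction k) (simp_all add: assms)

lemma length_concat_const: "(\<And>M. M \<in> set PC \<Longrightarrow> length (B M) = c) \<Longrightarrow> length (concat (map B PC)) = length PC * c"
  by (induction PC) auto

lemma Hd_bound: "2 \<le> m \<Longrightarrow> x \<in> set (Hd m) \<Longrightarrow> x < m"
proof -
  assume m: "2 \<le> m" "x \<in> set (Hd m)"
  have J: "Jm m < m" using m by (simp add: Jm_def)
  have one: "1 < m" using m by simp
  have one': "Suc 0 < m" "0 < m" using m by auto
  show ?thesis using m(2) one' unfolding Hd_def
    by (auto intro!: tix_bound phi_bound phi_pow_bound J one split: if_splits)
qed

lemma mset_single_iff: "mset M = {#x#} \<longleftrightarrow> M = [x]"
  by (cases M) auto

lemma app_nth: "i < length M \<Longrightarrow> app p M ! i = M ! p i"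
  by (simp add: app_def)

lemma tix_app:
  assumes "length xs = m'"
  shows "x # app (sx m') xs = app (tix (Suc m')) (x # xs)"
proof (rule nth_equalityI)
  show "length (x # app (sx m') xs) = length (app (tix (Suc m')) (x # xs))" by simp
  fix i assume i: "i < length (x # app (sx m') xs)"
  show "(x # app (sx m') xs) ! i = app (tix (Suc m')) (x # xs) ! i"
  proof (cases i)
    case 0
    then show ?thesis using i by (simp add: app_nth tix_def)
  next
    case (Suc k)
    then show ?thesis using i assms by (simp add: app_nth tix_def)
  qed
qed

lemma main_ind:
  "length L = m \<Longrightarrow> 0 < m \<Longrightarrow> m \<le> f \<Longrightarrow>
   fst (perm_go f 0 L) = app (sx m) L \<and> length (snd (perm_go f 0 L)) = fact m \<and>
   (distinct L \<longrightarrow> distinct (snd (perm_go f 0 L)) \<and> set (snd (perm_go f 0 L)) = {M. mset M = mset L})"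
proof (induction m arbitrary: L f)
  case 0
  then show ?case by simp
next
  case (Suc m')
  obtain f' where f: "f = Suc f'" using Suc.prems by (cases f) auto
  show ?case
  proof (cases "m' = 0")
    case True
    then obtain x where L: "L = [x]" using Suc.prems(1) by (cases L) auto
    show ?thesis unfolding L f using True
      by (simp add: perm_go_Suc app_def sx_def mset_single_iff)
  next
    case False
    define m where "m = Suc m'"
    have m2: "2 \<le> m" using False m_def by simp
    have lenL: "length L = m" using Suc.prems m_def by simp
    have f': "m' \<le> f'" using Suc.prems f by simp
    define T where "T M = fst (perm_go f' 1 M)" for M :: "'a list"
    define B where "B M = snd (perm_go f' 1 M)" for M :: "'a list"
    define Phi where "Phi j M = T (move M 0 j)" for j and M :: "'a list"
    have TB: "T M = app (tix m) M \<and> B M = map ((#) (hd M)) (snd (perm_go f' 0 (tl M)))"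
      if "length M = m" for M
    proof -
      have "M \<noteq> []" using that m2 by auto
      then obtain x xs where M: "M = x # xs" by (meson neq_Nil_conv)
      have lx: "length xs = m'" using that M m_def by simp
      have ih: "fst (perm_go f' 0 xs) = app (sx m') xs" using Suc.IH[OF lx _ f'] False by simp
      show ?thesis unfolding T_def B_def M sub1 using ih tix_app[OF lx, of x]
        by (simp add: lift_def m_def)
    qed
    have Bprop: "length (B M) = fact m' \<and> (distinct M \<longrightarrow> distinct (B M) \<and> set (B M) = {hd M # p | p. mset p = mset (tl M)})"
      if "length M = m" for M
    proof -
      have "M \<noteq> []" using that m2 by auto
      then obtain x xs where M: "M = x # xs" by (meson neq_Nil_conv)
      have lx: "length xs = m'" using that M m_def by simp
      have ih: "length (snd (perm_go f' 0 xs)) = fact m' \<and> (distinct xs \<longrightarrow> distinct (snd (perm_go f' 0 xs)) \<and>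
        set (snd (perm_go f' 0 xs)) = {M. mset M = mset xs})" using Suc.IH[OF lx _ f'] False by simp
      have "B M = map ((#) x) (snd (perm_go f' 0 xs))" using TB[OF that] M by simp
      then show ?thesis using ih M by (auto simp: distinct_map)
    qed
    have Tm: "mset (T M) = mset M" for M using mset_perm_go[of f' 1 M] by (simp add: T_def)
    have Phim: "mset (Phi j M) = mset M" if "j < length M" for j M
      using Tm mset_move[OF that] by (simp add: Phi_def)
    have stpE: "stp f' 0 j s = (Phi j (fst s), snd s @ B (move (fst s) 0 j))" for j s
      by (simp add: stp_def T_def B_def Phi_def)
    have iter: "(stp f' 0 j ^^ k) s = ((Phi j ^^ k) (fst s), snd s @ concat (map (\<lambda>t. B (move ((Phi j ^^ t) (fst s)) 0 j)) [0..<k]))" for j k s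
      by (rule iter_gen) (rule stpE)
    define J where "J = Jm m"
    have J: "J < m" "1 < m" using m2 by (auto simp: J_def Jm_def)
    define X1 where "X1 = Phi 1 (T L)"
    define PC where "PC = [L, move (T L) 0 1] @ map (\<lambda>t. move ((Phi J ^^ t) X1) 0 J) [0..<m-3]
       @ (if 2 < m then [move ((Phi J ^^ (m-3)) X1) 0 1] else [])"
    define FF where "FF = (if 2 < m then Phi 1 ((Phi J ^^ (m-3)) X1) else X1)"
    have PG: "perm_go f 0 L = (FF, concat (map B PC))"
    proof -
      have c: "\<not> length L \<le> 0 + 1" using lenL m2 by simp
      have jj: "(if even (length L - 0) then length L - 1 else 0 + 1) = J" using lenL by (simp add: J_def Jm_def)
      have p1: "perm_go f' (0+1) L = (T L, B L)" by (simp add: T_def B_def)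
      show ?thesis unfolding f perm_go_Suc[of f' 0 L] Let_def if_not_P[OF c] jj p1 iter
        by (simp add: FF_def PC_def X1_def lenL stpE comp_def)
    qed
    have Phi_app: "Phi j (app r L) = app (\<lambda>q. r (phi m j q)) L" if "j < m" for j r
    proof -
      have "Phi j (app r L) = app (tix m) (app (mvix j) (app r L))"
        unfolding Phi_def using TB[of "move (app r L) 0 j"] move_app[of j "app r L"] that lenL
        by (simp add: move_app)
      also have "\<dots> = app (\<lambda>q. r (phi m j q)) L"
        using that lenL by (simp add: app_comp tix_bound mvix_bound phi_def)
      finally show ?thesis .
    qed
    have Phi_pow: "(Phi j ^^ t) (app r L) = app (\<lambda>q. r ((phi m j ^^ t) q)) L" if "j < m" for j r t
    proof (induction t arbitrary: r)
      case 0 then show ?case by simp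
    next
      case (Suc t)
      have "(Phi j ^^ Suc t) (app r L) = (Phi j ^^ t) (Phi j (app r L))"
        by (simp add: funpow_Suc_right del: funpow.simps)
      also have "\<dots> = app (\<lambda>q. r (phi m j ((phi m j ^^ t) q))) L"
        unfolding Phi_app[OF that] Suc.IH by simp
      finally show ?case by simp
    qed
    have move_app': "move (app r L) 0 j = app (\<lambda>q. r (mvix j q)) L" if "j < m" for j r
      using that lenL by (simp add: move_app app_comp mvix_bound)
    have TL: "T L = app (tix m) L" using TB lenL by simp
    have X1: "X1 = app (\<lambda>q. tix m (phi m 1 q)) L" unfolding X1_def TL using Phi_app[OF J(2)] by simp
    have FF: "FF = app (Fin m) L"
    proof (cases "2 < m")
      case True
      then show ?thesis unfolding FF_def X1 Phi_pow[OF J(1)] Phi_app[OF J(2)] if_P[OF True]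
        by (intro app_cong) (simp add: Fin_def J_def)
    next
      case False
      then show ?thesis unfolding FF_def X1 if_not_P[OF False] by (intro app_cong) (simp add: Fin_def)
    qed
    have fst_ok: "fst (perm_go f 0 L) = app (sx m) L"
      unfolding PG FF using idx_ok[OF m2] lenL by (auto intro: app_cong)
    have lenPC: "length PC = m" using m2 by (auto simp: PC_def)
    have msPC: "mset M = mset L" if "M \<in> set PC" for M
    proof -
      have lT: "length (T L) = m" using TL lenL by simp
      have mT: "mset (T L) = mset L" by (rule Tm)
      have mX: "mset X1 = mset L" unfolding X1_def using Phim[of 1 "T L"] lT mT J by simp
      have mP: "mset ((Phi J ^^ t) X1) = mset L" for t
      proof (rule funpow_inv[of "\<lambda>M. mset M = mset L"])
        fix s :: "'a list" assume a: "mset s = mset L"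
        then have "length s = m" using lenL by (metis size_mset)
        then show "mset (Phi J s) = mset L" using Phim[of J s] J a by simp
      qed (rule mX)
      have lP: "length ((Phi J ^^ t) X1) = m" for t using mP[of t] lenL by (metis size_mset)
      show ?thesis using that mT lT mP lP J unfolding PC_def
        by (auto simp: mset_move split: if_splits)
    qed
    have hdPC: "map hd PC = map ((!) L) (Hd m)"
    proof -
      have "L \<noteq> []" using lenL m2 by auto
      then have hL: "hd L = L ! 0" by (rule hd_conv_nth)
      have h1: "hd (move (T L) 0 1) = L ! tix m 1" unfolding TL
        using move_app'[OF J(2)] lenL m2 by (simp add: hd_app mvix_def)
      have h2: "hd (move ((Phi J ^^ t) X1) 0 J) = L ! tix m (phi m 1 ((phi m J ^^ t) J))" for t
        unfolding X1 Phi_pow[OF J(1)] using move_app'[OF J(1)] lenL m2 by (simp add: hd_app mvix_def)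
      have h3: "hd (move ((Phi J ^^ (m-3)) X1) 0 1) = L ! tix m (phi m 1 ((phi m J ^^ (m-3)) 1))"
        unfolding X1 Phi_pow[OF J(1)] using move_app'[OF J(2)] lenL m2 by (simp add: hd_app mvix_def)
      show ?thesis unfolding PC_def Hd_def J_def[symmetric] using hL h1 h2 h3 by simp
    qed
    have lenB: "length (B M) = fact m'" if "M \<in> set PC" for M
      using Bprop[of M] msPC[OF that] lenL by (metis size_mset)
    have len_ok: "length (snd (perm_go f 0 L)) = fact m"
      unfolding PG using length_concat_const[of PC B "fact m'", OF lenB] lenPC m_def by simp
    have dist_ok: "distinct (snd (perm_go f 0 L)) \<and> set (snd (perm_go f 0 L)) = {M. mset M = mset L}"
      if dL: "distinct L"
    proof -
      have "distinct (map ((!) L) (Hd m))"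
      proof -
        have "inj_on ((!) L) (set (Hd m))"
          using Hd_bound[OF m2] dL lenL by (auto simp: inj_on_def nth_eq_iff_index_eq)
        then show ?thesis using idx_ok[OF m2] by (simp add: distinct_map)
      qed
      then have dh: "distinct (map hd PC)" using hdPC by simp
      have hB: "distinct (B M) \<and> set (B M) = {hd M # p | p. mset p = mset (tl M)} \<and> length (B M) = fact (length L - 1)"
        if "M \<in> set PC" for M
      proof -
        have "length M = m" using msPC[OF that] lenL by (metis size_mset)
        moreover have "distinct M" using msPC[OF that] dL by (metis mset_eq_imp_distinct_iff)
        ultimately show ?thesis using Bprop[of M] lenL m_def by simp
      qed
      have "L \<noteq> []" using lenL m2 by auto
      then show ?thesis unfolding PG snd_conv
        using combine[OF dL _ _ msPC dh hB] lenPC lenL by simp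
    qed
    show ?thesis using fst_ok len_ok dist_ok m_def by simp
  qed
qed


theorem mainTheorem3:
  fixes L :: "'a list" and k :: nat
  assumes "length L = k" and "distinct L"
  shows "length (perm_calls L) = fact k
         \<and> distinct (perm_calls L)
         \<and> set (perm_calls L) = {M. mset M = mset L}"
proof (cases "k = 0")
  case True
  then have "L = []" using assms by simp
  then show ?thesis using True by (simp add: perm_calls_def)
next
  case False
  have "fst (perm_go (Suc (length L)) 0 L) = app (sx k) L \<and> length (snd (perm_go (Suc (length L)) 0 L)) = fact k \<and>
   (distinct L \<longrightarrow> distinct (snd (perm_go (Suc (length L)) 0 L)) \<and> set (snd (perm_go (Suc (length L)) 0 L)) = {M. mset M = mset L})"
    by (rule main_ind) (use assms False in auto)
  then show ?thesis using assms by (simp add: perm_calls_def)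
qed

end
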